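(* Let $G=(V,E)$ be a connected simple graph with a set-valued metric $\Omega(-,-)$. Then $d_G(x,y)\ge|\Omega(x,y)|$ for all $x,y\in V$, where $d_G$ is the graph distance.
   Context: For a connected simple graph $G=(V,E)$ and a set $\Omega$, a set-valued metric on $G$ is a function $\Omega(-,-):V\times V\to 2^{\Omega}$ such that $\Omega(x,y)=\Omega(y,x)$ for all $x,y$; $|\Omega(x,y)|=1$ whenever $\{x,y\}\in E$; and $\Omega(x,z)=\Omega(x,y)\triangle\Omega(y,z)$ for all $x,y,z$, where $\triangle$ is symmetric difference. *)

theory Defs
  imports Main
begin

definition simple_graph :: "'a set \<Rightarrow> ('a \<Rightarrow> 'a \<Rightarrow> bool) \<Rightarrow> bool" where
  "simple_graph V E \<longleftrightarrow>
     (\<forall>x y. E x y \<longrightarrow> x \<in> V \<and> y \<in> V) \<and>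
     (\<forall>x y. E x y \<longrightarrow> E y x) \<and> (\<forall>x. \<not> E x x)"

definition is_walk :: "('a \<Rightarrow> 'a \<Rightarrow> bool) \<Rightarrow> 'a \<Rightarrow> 'a \<Rightarrow> 'a list \<Rightarrow> bool" where
  "is_walk E x y ps \<longleftrightarrow> ps \<noteq> [] \<and> hd ps = x \<and> last ps = y \<and>
     (\<forall>i. Suc i < length ps \<longrightarrow> E (ps ! i) (ps ! Suc i))"

definition connected_graph :: "'a set \<Rightarrow> ('a \<Rightarrow> 'a \<Rightarrow> bool) \<Rightarrow> bool" where
  "connected_graph V E \<longleftrightarrow> V \<noteq> {} \<and> (\<forall>x\<in>V. \<forall>y\<in>V. \<exists>ps. is_walk E x y ps)"

definition graph_dist :: "('a \<Rightarrow> 'a \<Rightarrow> bool) \<Rightarrow> 'a \<Rightarrow> 'a \<Rightarrow> nat" where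
  "graph_dist E x y = (LEAST n. \<exists>ps. is_walk E x y ps \<and> length ps = Suc n)"

definition set_valued_metric ::
  "'a set \<Rightarrow> ('a \<Rightarrow> 'a \<Rightarrow> bool) \<Rightarrow> ('a \<Rightarrow> 'a \<Rightarrow> 'b set) \<Rightarrow> bool" where
  "set_valued_metric V E Om \<longleftrightarrow>
     (\<forall>x\<in>V. \<forall>y\<in>V. Om x y = Om y x) \<and>
     (\<forall>x y. E x y \<longrightarrow> card (Om x y) = 1) \<and>
     (\<forall>x\<in>V. \<forall>y\<in>V. \<forall>z\<in>V. Om x z = (Om x y - Om y z) \<union> (Om y z - Om x y))"

end

theory Submission
  imports Defs
begin

lemma card_symdiff_le:
  assumes "finite A" "finite B"
  shows "card ((A - B) \<union> (B - A)) \<le> card A + card B"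
proof -
  have "card ((A - B) \<union> (B - A)) \<le> card (A - B) + card (B - A)" by (rule card_Un_le)
  also have "\<dots> \<le> card A + card B"
    using assms by (intro add_mono card_mono) auto
  finally show ?thesis .
qed

lemma walk_bound:
  assumes sg: "simple_graph V E" and m: "set_valued_metric V E Om"
  shows "\<And>x. ps \<noteq> [] \<Longrightarrow> hd ps = x \<Longrightarrow> x \<in> V \<Longrightarrow>
     (\<forall>i. Suc i < length ps \<longrightarrow> E (ps ! i) (ps ! Suc i)) \<Longrightarrow>
     finite (Om x (last ps)) \<and> card (Om x (last ps)) \<le> length ps - 1"
proof (induction ps)
  case Nil then show ?case by simp
next
  case (Cons a rest)
  have ax: "a = x" using Cons by simp
  show ?case
  proof (cases rest)
    case Nil
    have "Om x x = {}" using m Cons.prems ax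
      unfolding set_valued_metric_def by (metis Diff_cancel Un_absorb)
    then show ?thesis using Nil ax by simp
  next
    case (Cons q rest')
    have Exq: "E x q" using Cons.prems(4) ax Cons by (metis length_Cons nth_Cons_0 nth_Cons_Suc zero_less_Suc Suc_less_eq)
    then have qV: "q \<in> V" using sg unfolding simple_graph_def by blast
    have step: "\<forall>i. Suc i < length rest \<longrightarrow> E (rest ! i) (rest ! Suc i)"
    proof (intro allI impI)
      fix i assume "Suc i < length rest"
      then have "Suc (Suc i) < length (a # rest)" by simp
      then have "E ((a#rest) ! Suc i) ((a#rest) ! Suc (Suc i))" using Cons.prems(4) by blast
      then show "E (rest ! i) (rest ! Suc i)" by simp
    qed
    have IH: "finite (Om q (last rest)) \<and> card (Om q (last rest)) \<le> length rest - 1"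
      using Cons.IH[of q] Cons qV step by simp
    have lV: "last rest \<in> V"
    proof (cases rest')
      case Nil then show ?thesis using Cons qV by simp
    next
      case (Cons r rs)
      have "Suc (length rest - 2) < length rest" using \<open>rest = q # rest'\<close> Cons by simp
      then have "E (rest ! (length rest - 2)) (rest ! Suc (length rest - 2))" using step by blast
      moreover have "Suc (length rest - 2) = length rest - 1" using \<open>rest = q # rest'\<close> Cons by simp
      moreover have "rest ! (length rest - 1) = last rest" using \<open>rest = q # rest'\<close> by (simp add: last_conv_nth)
      ultimately show ?thesis using sg unfolding simple_graph_def by metis
    qed
    have eq: "Om x (last rest) = (Om x q - Om q (last rest)) \<union> (Om q (last rest) - Om x q)"
      using m Cons.prems(3) qV lV unfolding set_valued_metric_def by blast
    have c1: "card (Om x q) = 1" using m Exq unfolding set_valued_metric_def by blast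
    then have f1: "finite (Om x q)" by (metis card.infinite zero_neq_one)
    have "card (Om x (last rest)) \<le> card (Om x q) + card (Om q (last rest))"
      unfolding eq using f1 IH by (intro card_symdiff_le) auto
    then have "card (Om x (last rest)) \<le> length (a # rest) - 1"
      using c1 IH Cons by simp
    moreover have "finite (Om x (last rest))" unfolding eq using f1 IH by auto
    moreover have "last (a # rest) = last rest" using Cons by simp
    ultimately show ?thesis by simp
  qed
qed

theorem proposition3p5:
  fixes V :: "'a set" and E :: "'a \<Rightarrow> 'a \<Rightarrow> bool" and Om :: "'a \<Rightarrow> 'a \<Rightarrow> 'b set"
  assumes "simple_graph V E" and "connected_graph V E"
    and "set_valued_metric V E Om"
    and "x \<in> V" and "y \<in> V"
  shows "graph_dist E x y \<ge> card (Om x y)"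
proof -
  obtain ps where w: "is_walk E x y ps" using assms(2,4,5) unfolding connected_graph_def by blast
  have ex: "\<exists>n ps. is_walk E x y ps \<and> length ps = Suc n"
    using w unfolding is_walk_def by (metis length_greater_0_conv Suc_pred)
  then have "\<exists>ps. is_walk E x y ps \<and> length ps = Suc (graph_dist E x y)"
    unfolding graph_dist_def by (rule LeastI_ex)
  then obtain qs where q: "is_walk E x y qs" "length qs = Suc (graph_dist E x y)"
    by blast
  have "card (Om x (last qs)) \<le> length qs - 1"
    using walk_bound[OF assms(1,3), of qs x] q(1) assms(4) unfolding is_walk_def by blast
  then show ?thesis using q unfolding is_walk_def by simp
qed

end
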